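(* Let $\mathcal{D}$ be an arbitrary distribution on polygonal curves of complexity $m$ whose vertices lie in the unit Euclidean ball $B_2^d$. Let $P=\{\sigma_1,\dots,\sigma_n\}$ be an i.i.d. sample from $\mathcal{D}$ of size $n$. Then the Rademacher and Gaussian complexities for learning the median curve of complexity $m$ under DTW satisfy $\mathcal{R}(P),\mathcal{G}(P)\in\Omega\!\left(\sqrt{m^2/n}\right)$.
   Context: For curves $\sigma=(v_1,\dots,v_{m'})$, $\tau=(w_1,\dots,w_{m''})$, a traversal $T$ is a sequence of index pairs starting with $(1,1)$, ending with $(m',m'')$, each $(i,j)$ followed only by $(i+1,j)$, $(i,j+1)$ or $(i+1,j+1)$; $d_{DTW}(\sigma,\tau)=\min_T\sum_{(i,j)\in T}\|v_i-w_j\|$. Candidate median curves $\psi$ range over curves of complexity $m$ with vertices in $B_2^d$. With independent Rademacher variables $r_i$ and independent standard Gaussians $g_i$, $\mathcal{R}(P)=\mathbb{E}\sup_\psi\left|\frac1n\sum_{i=1}^n d_{DTW}(\sigma_i,\psi)r_i\right|$ and $\mathcal{G}(P)=\mathbb{E}\sup_\psi\left|\frac1n\sum_{i=1}^n d_{DTW}(\sigma_i,\psi)g_i\right|$. *)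

theory Defs
  imports "HOL-Probability.Probability"
begin

text \<open>Points of R^d are represented as functions nat => real; only the
coordinates k < d matter (all others are required to be 0 for ball points).\<close>

type_synonym point = "nat \<Rightarrow> real"
type_synonym curve = "point list"

definition edist :: "nat \<Rightarrow> point \<Rightarrow> point \<Rightarrow> real" where
  "edist d x y = sqrt (\<Sum>k<d. (x k - y k)\<^sup>2)"

definition unit_ball :: "nat \<Rightarrow> point set" where
  "unit_ball d = {x. (\<Sum>k<d. (x k)\<^sup>2) \<le> 1 \<and> (\<forall>k\<ge>d. x k = 0)}"

definition curves :: "nat \<Rightarrow> nat \<Rightarrow> curve set" where
  "curves d m = {c. length c = m \<and> set c \<subseteq> unit_ball d}"

text \<open>Traversals (0-based indices): start (0,0), end (m'-1,m''-1),
each step (i+1,j), (i,j+1) or (i+1,j+1).\<close>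
definition traversal :: "nat \<Rightarrow> nat \<Rightarrow> (nat \<times> nat) list \<Rightarrow> bool" where
  "traversal m1 m2 T \<longleftrightarrow> T \<noteq> [] \<and> hd T = (0, 0) \<and> last T = (m1 - 1, m2 - 1) \<and>
     (\<forall>k. Suc k < length T \<longrightarrow>
        (let (i, j) = T ! k in T ! Suc k \<in> {(Suc i, j), (i, Suc j), (Suc i, Suc j)}))"

definition dtw :: "nat \<Rightarrow> curve \<Rightarrow> curve \<Rightarrow> real" where
  "dtw d \<sigma> \<tau> = Inf {(\<Sum>(i, j)\<leftarrow>T. edist d (\<sigma> ! i) (\<tau> ! j)) | T.
                       traversal (length \<sigma>) (length \<tau>) T}"

text \<open>Empirical Rademacher complexity of the sample sigma_0..sigma_{n-1}
(expectation over uniform signs, computed exactly as a finite average).\<close>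
definition rademacher_complexity :: "nat \<Rightarrow> nat \<Rightarrow> nat \<Rightarrow> (nat \<Rightarrow> curve) \<Rightarrow> real" where
  "rademacher_complexity d m n \<sigma> =
     (\<Sum>r\<in>PiE {..<n} (\<lambda>_. {-1, 1::real}).
        (SUP \<psi>\<in>curves d m. \<bar>(1 / real n) * (\<Sum>i<n. dtw d (\<sigma> i) \<psi> * r i)\<bar>)) / 2 ^ n"

definition std_gaussian :: "real measure" where
  "std_gaussian = density lborel std_normal_density"

definition gaussian_complexity :: "nat \<Rightarrow> nat \<Rightarrow> nat \<Rightarrow> (nat \<Rightarrow> curve) \<Rightarrow> real" where
  "gaussian_complexity d m n \<sigma> =
     integral\<^sup>L (PiM {..<n} (\<lambda>_. std_gaussian))
       (\<lambda>g. SUP \<psi>\<in>curves d m. \<bar>(1 / real n) * (\<Sum>i<n. dtw d (\<sigma> i) \<psi> * g i)\<bar>)"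

end

theory Submission
  imports Defs
begin

lemma upd_sum: "(\<Sum>i<Suc n. b i * (g(n := y)) i) = (\<Sum>i<n. b i * g i) + b n * (y::real)"
proof -
  have "(\<Sum>i<n. b i * (g(n := y)) i) = (\<Sum>i<n. b i * g i)" by (rule sum.cong) auto
  then show ?thesis by simp
qed

lemma rad_Suc:
  fixes b :: "nat \<Rightarrow> real"
  shows "(\<Sum>r\<in>PiE {..<Suc n} (\<lambda>_. {-1,1::real}). \<phi> (\<Sum>i<Suc n. b i * r i)) =
    (\<Sum>r\<in>PiE {..<n} (\<lambda>_. {-1,1::real}). \<phi> ((\<Sum>i<n. b i * r i) + b n) + \<phi> ((\<Sum>i<n. b i * r i) - b n))"
proof -
  have e: "{..<Suc n} = insert n {..<n}" by auto
  have inj: "inj_on (\<lambda>(y, g). g(n := y)) ({-1,1::real} \<times> PiE {..<n} (\<lambda>_. {-1,1::real}))"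
    using inj_combinator[of n "{..<n}" "\<lambda>_. {-1,1::real}"] by simp
  have "(\<Sum>r\<in>PiE {..<Suc n} (\<lambda>_. {-1,1::real}). \<phi> (\<Sum>i<Suc n. b i * r i))
     = (\<Sum>(y,g)\<in>{-1,1::real} \<times> PiE {..<n} (\<lambda>_. {-1,1::real}). \<phi> (\<Sum>i<Suc n. b i * (g(n := y)) i))"
    unfolding e PiE_insert_eq by (subst sum.reindex[OF inj]) (simp add: case_prod_beta)
  also have "\<dots> = (\<Sum>y\<in>{-1,1::real}. \<Sum>g\<in>PiE {..<n} (\<lambda>_. {-1,1::real}). \<phi> (\<Sum>i<Suc n. b i * (g(n := y)) i))"
    by (rule sum.cartesian_product[symmetric])
  also have "\<dots> = (\<Sum>y\<in>{-1,1::real}. \<Sum>g\<in>PiE {..<n} (\<lambda>_. {-1,1::real}). \<phi> ((\<Sum>i<n. b i * g i) + b n * y))"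
    by (simp only: upd_sum)
  also have "\<dots> = (\<Sum>r\<in>PiE {..<n} (\<lambda>_. {-1,1::real}). \<phi> ((\<Sum>i<n. b i * r i) + b n) + \<phi> ((\<Sum>i<n. b i * r i) - b n))"
    by (simp add: sum.distrib add.commute)
  finally show ?thesis .
qed

definition radsum :: "nat \<Rightarrow> (nat \<Rightarrow> real) \<Rightarrow> (real \<Rightarrow> real) \<Rightarrow> real" where
  "radsum n b \<phi> = (\<Sum>r\<in>PiE {..<n} (\<lambda>_. {-1,1::real}). \<phi> (\<Sum>i<n. b i * r i))"

lemma radsum_Suc: "radsum (Suc n) b \<phi> = radsum n b (\<lambda>s. \<phi> (s + b n) + \<phi> (s - b n))"
  unfolding radsum_def by (rule rad_Suc)

lemma radsum_add: "radsum n b (\<lambda>s. f s + g s) = radsum n b f + radsum n b g"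
  unfolding radsum_def by (simp add: sum.distrib)

lemma radsum_cmult: "radsum n b (\<lambda>s. c * f s) = c * radsum n b f"
  unfolding radsum_def by (simp add: sum_distrib_left)

lemma radsum_const: "radsum n b (\<lambda>s. c) = c * 2 ^ n"
proof -
  have "card {-1,1::real} = 2" by simp
  then show ?thesis unfolding radsum_def by (simp add: card_PiE)
qed

lemma radsum_mono: "(\<And>s. f s \<le> g s) \<Longrightarrow> radsum n b f \<le> radsum n b g"
  unfolding radsum_def by (intro sum_mono) auto

lemma radsum_m2: "radsum n b (\<lambda>s. s\<^sup>2) = 2 ^ n * (\<Sum>i<n. (b i)\<^sup>2)"
proof (induction n)
  case 0
  then show ?case using radsum_const[of 0 b 0] by (simp add: radsum_def)
next
  case (Suc n)
  have "radsum (Suc n) b (\<lambda>s. s\<^sup>2) = radsum n b (\<lambda>s. 2 * s\<^sup>2 + 2 * (b n)\<^sup>2)"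
    unfolding radsum_Suc by (simp add: power2_eq_square algebra_simps)
  also have "\<dots> = 2 * radsum n b (\<lambda>s. s\<^sup>2) + 2 * (b n)\<^sup>2 * 2 ^ n"
    by (simp add: radsum_add radsum_cmult radsum_const)
  finally show ?case using Suc by (simp add: algebra_simps)
qed

lemma radsum_m4: "radsum n b (\<lambda>s. s ^ 4) \<le> 3 * 2 ^ n * (\<Sum>i<n. (b i)\<^sup>2)\<^sup>2"
proof (induction n)
  case 0
  then show ?case by (simp add: radsum_def)
next
  case (Suc n)
  define B where "B = (\<Sum>i<n. (b i)\<^sup>2)"
  have B0: "B \<ge> 0" unfolding B_def by (simp add: sum_nonneg)
  have "radsum (Suc n) b (\<lambda>s. s ^ 4) = radsum n b (\<lambda>s. 2 * s ^ 4 + (12 * (b n)\<^sup>2 * s\<^sup>2 + 2 * (b n) ^ 4))"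
    unfolding radsum_Suc by (rule arg_cong[where f="radsum n b"]) (auto simp: power2_eq_square power4_eq_xxxx algebra_simps)
  also have "\<dots> = 2 * radsum n b (\<lambda>s. s ^ 4) + 12 * (b n)\<^sup>2 * radsum n b (\<lambda>s. s\<^sup>2) + 2 * (b n) ^ 4 * 2 ^ n"
    by (simp add: radsum_add radsum_cmult radsum_const)
  also have "\<dots> \<le> 2 * (3 * 2 ^ n * B\<^sup>2) + 12 * (b n)\<^sup>2 * (2 ^ n * B) + 2 * (b n) ^ 4 * 2 ^ n"
    using Suc unfolding radsum_m2 B_def by simp
  also have "\<dots> \<le> 3 * 2 ^ Suc n * (B + (b n)\<^sup>2)\<^sup>2"
  proof -
    define c where "c = (b n)\<^sup>2"
    have b4: "(b n) ^ 4 = c\<^sup>2" unfolding c_def by simp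
    have "(0::real) \<le> 4 * c\<^sup>2 * 2 ^ n" by simp
    then show ?thesis unfolding b4 c_def[symmetric] by (simp add: power2_eq_square algebra_simps)
  qed
  finally show ?case by (simp add: B_def)
qed

lemma abs_lower_poly:
  fixes x t :: real assumes "t > 0"
  shows "3 / (2 * t) * x\<^sup>2 - x ^ 4 / (2 * t ^ 3) \<le> \<bar>x\<bar>"
proof -
  define u where "u = \<bar>x\<bar> / t"
  have u0: "u \<ge> 0" using assms by (simp add: u_def)
  have x3: "\<bar>x\<bar> = u * t" using assms by (simp add: u_def)
  have x1: "x\<^sup>2 = (u * t)\<^sup>2" by (metis x3 power2_abs)
  have x2: "x ^ 4 = (u * t) ^ 4"
  proof -
    have "x ^ 4 = (x\<^sup>2)\<^sup>2" by simp
    also have "\<dots> = ((u * t)\<^sup>2)\<^sup>2" using x1 by simp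
    finally show ?thesis by simp
  qed
  note x = x1 x2 x3
  have key: "u * (u - 1)\<^sup>2 * (u + 2) \<ge> 0" using u0 by simp
  have "3 / (2 * t) * x\<^sup>2 - x ^ 4 / (2 * t ^ 3) = t * (3 * u\<^sup>2 - u ^ 4) / 2"
    using assms unfolding x by (simp add: field_simps power2_eq_square power3_eq_cube power4_eq_xxxx)
  also have "\<dots> \<le> t * u"
  proof -
    have "3 * u\<^sup>2 - u ^ 4 \<le> 2 * u" using key by (simp add: power2_eq_square power4_eq_xxxx algebra_simps)
    then have "t * (3 * u\<^sup>2 - u ^ 4) \<le> t * (2 * u)" using assms by (intro mult_left_mono) auto
    then show ?thesis by simp
  qed
  finally show ?thesis using x by (simp add: mult.commute)
qed

lemma khintchine_low_from_moments:
  fixes M1 M2 M4 B :: real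
  assumes B: "B > 0" and h: "\<And>t. t > 0 \<Longrightarrow> M1 \<ge> 3 / (2 * t) * M2 - M4 / (2 * t ^ 3)"
    and m2: "M2 = B" and m4: "M4 \<le> 3 * B\<^sup>2"
  shows "M1 \<ge> sqrt (B / 3)"
proof -
  define t where "t = sqrt (3 * B)"
  have t: "t > 0" "t\<^sup>2 = 3 * B" using B by (auto simp: t_def)
  have t3: "t ^ 3 = 3 * B * t" using t(2) by (simp add: power2_eq_square power3_eq_cube)
  have "M1 \<ge> 3 / (2 * t) * B - 3 * B\<^sup>2 / (2 * t ^ 3)"
    using h[OF t(1)] m2 m4 t(1) by (smt (verit, best) divide_right_mono zero_less_power)
  also have "3 / (2 * t) * B - 3 * B\<^sup>2 / (2 * t ^ 3) = B / t"
    unfolding t3 using t B by (simp add: field_simps power2_eq_square)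
  also have "B / t = sqrt (B / 3)"
    using B unfolding t_def by (simp add: real_sqrt_divide real_sqrt_mult field_simps)
  finally show ?thesis .
qed

lemma radsum_abs: "radsum n b abs \<ge> 2 ^ n * sqrt ((\<Sum>i<n. (b i)\<^sup>2) / 3)"
proof (cases "(\<Sum>i<n. (b i)\<^sup>2) = 0")
  case True
  then show ?thesis using radsum_mono[of "\<lambda>_. 0" abs n b] by (simp add: radsum_const)
next
  case False
  define B where "B = (\<Sum>i<n. (b i)\<^sup>2)"
  have B: "B > 0" using False unfolding B_def by (metis less_eq_real_def sum_nonneg zero_le_power2)
  have "radsum n b abs / 2 ^ n \<ge> sqrt (B / 3)"
  proof (rule khintchine_low_from_moments[OF B])
    show "radsum n b (\<lambda>s. s\<^sup>2) / 2 ^ n = B" by (simp add: radsum_m2 B_def)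
    show "radsum n b (\<lambda>s. s ^ 4) / 2 ^ n \<le> 3 * B\<^sup>2"
      using radsum_m4[of n b] by (simp add: B_def divide_le_eq mult.commute mult.left_commute)
    fix t :: real assume t: "t > 0"
    define a where "a = 3 / (2 * t)"
    define c where "c = - 1 / (2 * t ^ 3)"
    have "radsum n b (\<lambda>s. a * s\<^sup>2 + c * s ^ 4) \<le> radsum n b abs"
      using abs_lower_poly[OF t] by (intro radsum_mono) (simp add: a_def c_def)
    then have "(a * radsum n b (\<lambda>s. s\<^sup>2) + c * radsum n b (\<lambda>s. s ^ 4)) / 2 ^ n \<le> radsum n b abs / 2 ^ n"
      by (simp add: radsum_add radsum_cmult divide_right_mono)
    moreover have "(a * radsum n b (\<lambda>s. s\<^sup>2) + c * radsum n b (\<lambda>s. s ^ 4)) / 2 ^ n =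
       3 / (2 * t) * (radsum n b (\<lambda>s. s\<^sup>2) / 2 ^ n) - radsum n b (\<lambda>s. s ^ 4) / 2 ^ n / (2 * t ^ 3)"
      unfolding a_def c_def by (simp add: add_divide_distrib diff_divide_distrib)
    ultimately show "3 / (2 * t) * (radsum n b (\<lambda>s. s\<^sup>2) / 2 ^ n) - radsum n b (\<lambda>s. s ^ 4) / 2 ^ n / (2 * t ^ 3)
        \<le> radsum n b abs / 2 ^ n" by simp
  qed
  then show ?thesis by (simp add: B_def field_simps)
qed


lemma sets_std_gaussian[measurable_cong, simp]: "sets std_gaussian = sets borel"
  by (simp add: std_gaussian_def)

lemma space_std_gaussian[simp]: "space std_gaussian = UNIV"
  by (simp add: std_gaussian_def)

lemma prob_space_std_gaussian: "prob_space std_gaussian"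
  unfolding std_gaussian_def by (rule prob_space_normal_density) simp

lemma gauss_integrable_pow: "integrable std_gaussian (\<lambda>y. y ^ k)"
  unfolding std_gaussian_def
  by (subst integrable_density) (auto simp: normal_density_nonneg integrable_std_normal_moment)

lemma gauss_integral_pow: "integral\<^sup>L std_gaussian (\<lambda>y. y ^ k) = integral\<^sup>L lborel (\<lambda>x. std_normal_density x * x ^ k)"
  unfolding std_gaussian_def
  by (subst integral_density) (auto simp: normal_density_nonneg)

lemma gauss_m1: "integral\<^sup>L std_gaussian (\<lambda>y. y) = 0"
  using integral_std_normal_moment_odd[of 0] gauss_integral_pow[of 1] by simp
lemma gauss_m2: "integral\<^sup>L std_gaussian (\<lambda>y. y ^ 2) = 1"
  using integral_std_normal_moment_even[of 1] by (simp add: gauss_integral_pow)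
lemma gauss_m3: "integral\<^sup>L std_gaussian (\<lambda>y. y ^ 3) = 0"
  using integral_std_normal_moment_odd[of 1] by (simp add: gauss_integral_pow)
lemma gauss_m4: "integral\<^sup>L std_gaussian (\<lambda>y. y ^ 4) = 3"
  using integral_std_normal_moment_even[of 2] by (simp add: gauss_integral_pow fact_numeral)

lemma gauss_poly:
  "integral\<^sup>L std_gaussian (\<lambda>y. c0 + c1 * y + c2 * y\<^sup>2 + c3 * y ^ 3 + c4 * y ^ 4) = c0 + c2 + 3 * c4"
proof -
  interpret prob_space std_gaussian by (rule prob_space_std_gaussian)
  have I1: "integrable std_gaussian (\<lambda>y. y)" using gauss_integrable_pow[of 1] by simp
  have I2: "integrable std_gaussian (\<lambda>y. y\<^sup>2)" using gauss_integrable_pow[of 2] by simp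
  note I = I1 I2 gauss_integrable_pow[of 3] gauss_integrable_pow[of 4]
  have "integral\<^sup>L std_gaussian (\<lambda>y. c0 + c1 * y + c2 * y\<^sup>2 + c3 * y ^ 3 + c4 * y ^ 4)
     = integral\<^sup>L std_gaussian (\<lambda>y. c0 + c1 * y + c2 * y\<^sup>2 + c3 * y ^ 3) + integral\<^sup>L std_gaussian (\<lambda>y. c4 * y ^ 4)"
    by (rule Bochner_Integration.integral_add; intro Bochner_Integration.integrable_add Bochner_Integration.integrable_mult_right I integrable_const)
  also have "integral\<^sup>L std_gaussian (\<lambda>y. c0 + c1 * y + c2 * y\<^sup>2 + c3 * y ^ 3)
     = integral\<^sup>L std_gaussian (\<lambda>y. c0 + c1 * y + c2 * y\<^sup>2) + integral\<^sup>L std_gaussian (\<lambda>y. c3 * y ^ 3)"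
    by (rule Bochner_Integration.integral_add; intro Bochner_Integration.integrable_add Bochner_Integration.integrable_mult_right I integrable_const)
  also have "integral\<^sup>L std_gaussian (\<lambda>y. c0 + c1 * y + c2 * y\<^sup>2)
     = integral\<^sup>L std_gaussian (\<lambda>y. c0 + c1 * y) + integral\<^sup>L std_gaussian (\<lambda>y. c2 * y\<^sup>2)"
    by (rule Bochner_Integration.integral_add; intro Bochner_Integration.integrable_add Bochner_Integration.integrable_mult_right I integrable_const)
  also have "integral\<^sup>L std_gaussian (\<lambda>y. c0 + c1 * y)
     = integral\<^sup>L std_gaussian (\<lambda>y. c0) + integral\<^sup>L std_gaussian (\<lambda>y. c1 * y)"
    by (rule Bochner_Integration.integral_add; intro Bochner_Integration.integrable_add Bochner_Integration.integrable_mult_right I integrable_const)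
  finally show ?thesis
    using gauss_m1 gauss_m2 gauss_m3 gauss_m4 prob_space by simp
qed

lemma gauss_nn_poly:
  assumes nn: "\<And>y. 0 \<le> c0 + c1 * y + c2 * y\<^sup>2 + c3 * y ^ 3 + c4 * y ^ 4"
  shows "(\<integral>\<^sup>+ y. ennreal (c0 + c1 * y + c2 * y\<^sup>2 + c3 * y ^ 3 + c4 * y ^ 4) \<partial>std_gaussian) = ennreal (c0 + c2 + 3 * c4)"
proof -
  interpret prob_space std_gaussian by (rule prob_space_std_gaussian)
  have I1: "integrable std_gaussian (\<lambda>y. y)" using gauss_integrable_pow[of 1] by simp
  have I2: "integrable std_gaussian (\<lambda>y. y\<^sup>2)" using gauss_integrable_pow[of 2] by simp
  note I = I1 I2 gauss_integrable_pow[of 3] gauss_integrable_pow[of 4]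
  have "integrable std_gaussian (\<lambda>y. c0 + c1 * y + c2 * y\<^sup>2 + c3 * y ^ 3 + c4 * y ^ 4)"
    by (intro Bochner_Integration.integrable_add Bochner_Integration.integrable_mult_right I integrable_const)
  then show ?thesis using nn by (subst nn_integral_eq_integral) (auto simp: gauss_poly)
qed

lemma id2: "((s::real) + c * y)\<^sup>2 = s\<^sup>2 + (2 * s * c) * y + c\<^sup>2 * y\<^sup>2 + 0 * y ^ 3 + 0 * y ^ 4"
  by (simp add: power2_eq_square algebra_simps)

lemma id4: "((s::real) + c * y) ^ 4 = s ^ 4 + (4 * s ^ 3 * c) * y + (6 * s\<^sup>2 * c\<^sup>2) * y\<^sup>2 + (4 * s * c ^ 3) * y ^ 3 + c ^ 4 * y ^ 4"
  by (simp add: power2_eq_square power3_eq_cube power4_eq_xxxx algebra_simps)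

lemma gauss_inner2: "(\<integral>\<^sup>+ y. ennreal ((s + c * y)\<^sup>2) \<partial>std_gaussian) = ennreal (s\<^sup>2 + c\<^sup>2)"
proof -
  have "(\<integral>\<^sup>+ y. ennreal ((s + c * y)\<^sup>2) \<partial>std_gaussian) =
     (\<integral>\<^sup>+ y. ennreal (s\<^sup>2 + (2 * s * c) * y + c\<^sup>2 * y\<^sup>2 + 0 * y ^ 3 + 0 * y ^ 4) \<partial>std_gaussian)"
    by (simp only: id2)
  also have "\<dots> = ennreal (s\<^sup>2 + c\<^sup>2 + 3 * 0)"
  proof (rule gauss_nn_poly)
    fix y :: real
    have "0 \<le> (s + c * y)\<^sup>2" by simp
    then show "0 \<le> s\<^sup>2 + (2 * s * c) * y + c\<^sup>2 * y\<^sup>2 + 0 * y ^ 3 + 0 * y ^ 4" by (simp only: id2)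
  qed
  finally show ?thesis by simp
qed

lemma gauss_inner4: "(\<integral>\<^sup>+ y. ennreal ((s + c * y) ^ 4) \<partial>std_gaussian) = ennreal (s ^ 4 + 6 * c\<^sup>2 * s\<^sup>2 + 3 * c ^ 4)"
proof -
  have "(\<integral>\<^sup>+ y. ennreal ((s + c * y) ^ 4) \<partial>std_gaussian) =
     (\<integral>\<^sup>+ y. ennreal (s ^ 4 + (4 * s ^ 3 * c) * y + (6 * s\<^sup>2 * c\<^sup>2) * y\<^sup>2 + (4 * s * c ^ 3) * y ^ 3 + c ^ 4 * y ^ 4) \<partial>std_gaussian)"
    by (simp only: id4)
  also have "\<dots> = ennreal (s ^ 4 + 6 * s\<^sup>2 * c\<^sup>2 + 3 * c ^ 4)"
  proof (rule gauss_nn_poly)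
    fix y :: real
    have "0 \<le> (s + c * y) ^ 4" by (simp add: zero_le_even_power)
    then show "0 \<le> s ^ 4 + (4 * s ^ 3 * c) * y + (6 * s\<^sup>2 * c\<^sup>2) * y\<^sup>2 + (4 * s * c ^ 3) * y ^ 3 + c ^ 4 * y ^ 4" by (simp only: id4)
  qed
  also have "s ^ 4 + 6 * s\<^sup>2 * c\<^sup>2 + 3 * c ^ 4 = s ^ 4 + 6 * c\<^sup>2 * s\<^sup>2 + 3 * c ^ 4" by simp
  finally show ?thesis .
qed


abbreviation GP :: "nat \<Rightarrow> (nat \<Rightarrow> real) measure" where
  "GP n \<equiv> PiM {..<n} (\<lambda>_. std_gaussian)"

lemma psf: "product_sigma_finite (\<lambda>_::nat. std_gaussian)"
  unfolding product_sigma_finite_def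
  using prob_space_std_gaussian prob_space_imp_sigma_finite by blast

lemma prob_space_GP: "prob_space (GP n)"
  by (rule prob_space_PiM) (rule prob_space_std_gaussian)

lemma GP_Suc:
  assumes [measurable]: "f \<in> borel_measurable (GP (Suc n))"
  shows "integral\<^sup>N (GP (Suc n)) f = (\<integral>\<^sup>+ x. (\<integral>\<^sup>+ y. f (x(n := y)) \<partial>std_gaussian) \<partial>GP n)"
proof -
  interpret product_sigma_finite "\<lambda>_::nat. std_gaussian" by (rule psf)
  have e: "{..<Suc n} = insert n {..<n}" by auto
  show ?thesis using assms unfolding e by (subst product_nn_integral_insert) auto
qed

lemma S_meas[measurable]: "(\<lambda>x. \<Sum>i<n. b i * x i) \<in> borel_measurable (GP n)"
  by measurable

lemma S_upd: "x \<in> space (GP n) \<Longrightarrow> (\<Sum>i<Suc n. b i * (x(n := y)) i) = (\<Sum>i<n. b i * x i) + b n * y"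
proof -
  have "(\<Sum>i<n. b i * (x(n := y)) i) = (\<Sum>i<n. b i * x i)" by (rule sum.cong) auto
  then show ?thesis by simp
qed

lemma GP_m2: "(\<integral>\<^sup>+ x. ennreal ((\<Sum>i<n. b i * x i)\<^sup>2) \<partial>GP n) = ennreal (\<Sum>i<n. (b i)\<^sup>2)"
proof (induction n)
  case 0
  interpret prob_space "GP 0" by (rule prob_space_GP)
  show ?case by (simp add: emeasure_space_1)
next
  case (Suc n)
  interpret prob_space "GP n" by (rule prob_space_GP)
  have "(\<integral>\<^sup>+ x. ennreal ((\<Sum>i<Suc n. b i * x i)\<^sup>2) \<partial>GP (Suc n))
      = (\<integral>\<^sup>+ x. ennreal ((\<Sum>i<n. b i * x i)\<^sup>2) + ennreal ((b n)\<^sup>2) \<partial>GP n)"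
    by (subst GP_Suc) (auto intro!: nn_integral_cong simp: S_upd gauss_inner2)
  also have "\<dots> = ennreal (\<Sum>i<n. (b i)\<^sup>2) + ennreal ((b n)\<^sup>2)"
    by (subst nn_integral_add) (auto simp: Suc emeasure_space_1)
  finally show ?case by (simp add: sum_nonneg)
qed

lemma GP_m4: "(\<integral>\<^sup>+ x. ennreal ((\<Sum>i<n. b i * x i) ^ 4) \<partial>GP n) = ennreal (3 * (\<Sum>i<n. (b i)\<^sup>2)\<^sup>2)"
proof (induction n)
  case 0
  interpret prob_space "GP 0" by (rule prob_space_GP)
  show ?case by (simp add: emeasure_space_1)
next
  case (Suc n)
  interpret prob_space "GP n" by (rule prob_space_GP)
  define B where "B = (\<Sum>i<n. (b i)\<^sup>2)"
  have B0: "B \<ge> 0" unfolding B_def by (simp add: sum_nonneg)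
  have I2: "(\<integral>\<^sup>+ x. ennreal (6 * (b n)\<^sup>2) * ennreal ((\<Sum>i<n. b i * x i)\<^sup>2) + ennreal (3 * (b n) ^ 4) \<partial>GP n)
     = ennreal (6 * (b n)\<^sup>2) * ennreal B + ennreal (3 * (b n) ^ 4)"
    by (subst nn_integral_add) (auto simp: nn_integral_cmult GP_m2 emeasure_space_1 B_def)
  have "(\<integral>\<^sup>+ x. ennreal ((\<Sum>i<Suc n. b i * x i) ^ 4) \<partial>GP (Suc n))
      = (\<integral>\<^sup>+ x. ennreal ((\<Sum>i<n. b i * x i) ^ 4) + (ennreal (6 * (b n)\<^sup>2) * ennreal ((\<Sum>i<n. b i * x i)\<^sup>2) + ennreal (3 * (b n) ^ 4)) \<partial>GP n)"
  proof (subst GP_Suc, simp, intro nn_integral_cong)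
    fix x assume x: "x \<in> space (GP n)"
    have "0 \<le> (\<Sum>i<n. b i * x i) ^ 4" by (simp add: zero_le_even_power)
    then show "(\<integral>\<^sup>+ y. ennreal ((\<Sum>i<Suc n. b i * (x(n := y)) i) ^ 4) \<partial>std_gaussian) =
       ennreal ((\<Sum>i<n. b i * x i) ^ 4) + (ennreal (6 * (b n)\<^sup>2) * ennreal ((\<Sum>i<n. b i * x i)\<^sup>2) + ennreal (3 * (b n) ^ 4))"
      using x by (simp add: S_upd gauss_inner4 ennreal_mult[symmetric] ennreal_plus[symmetric] zero_le_even_power del: ennreal_plus)
  qed
  also have "\<dots> = ennreal (3 * B\<^sup>2) + (\<integral>\<^sup>+ x. ennreal (6 * (b n)\<^sup>2) * ennreal ((\<Sum>i<n. b i * x i)\<^sup>2) + ennreal (3 * (b n) ^ 4) \<partial>GP n)"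
    by (subst nn_integral_add) (auto simp: Suc B_def)
  also have "\<dots> = ennreal (3 * B\<^sup>2) + (ennreal (6 * (b n)\<^sup>2) * ennreal B + ennreal (3 * (b n) ^ 4))"
    by (simp only: I2)

  also have "\<dots> = ennreal (3 * (B + (b n)\<^sup>2)\<^sup>2)"
  proof -
    have eq: "3 * (B + (b n)\<^sup>2)\<^sup>2 = 3 * B\<^sup>2 + (6 * (b n)\<^sup>2 * B + 3 * (b n) ^ 4)"
      by (simp add: power2_eq_square power4_eq_xxxx algebra_simps)
    have m: "ennreal (6 * (b n)\<^sup>2) * ennreal B = ennreal (6 * (b n)\<^sup>2 * B)" using B0 by (simp add: ennreal_mult)
    have p1: "ennreal (6 * (b n)\<^sup>2 * B) + ennreal (3 * (b n) ^ 4) = ennreal (6 * (b n)\<^sup>2 * B + 3 * (b n) ^ 4)"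
      by (rule ennreal_plus[symmetric]) (use B0 in \<open>simp_all add: zero_le_even_power\<close>)
    have p2: "ennreal (3 * B\<^sup>2) + ennreal (6 * (b n)\<^sup>2 * B + 3 * (b n) ^ 4) = ennreal (3 * B\<^sup>2 + (6 * (b n)\<^sup>2 * B + 3 * (b n) ^ 4))"
      by (rule ennreal_plus[symmetric]) (use B0 in \<open>simp_all add: zero_le_even_power\<close>)
    show ?thesis by (simp only: eq m p1 p2)
  qed
  finally show ?case by (simp add: B_def)
qed


lemma gauss_khintchine:
  fixes b :: "nat \<Rightarrow> real"
  shows "integrable (GP n) (\<lambda>x. \<bar>\<Sum>i<n. b i * x i\<bar>)"
    and "integral\<^sup>L (GP n) (\<lambda>x. \<bar>\<Sum>i<n. b i * x i\<bar>) \<ge> sqrt ((\<Sum>i<n. (b i)\<^sup>2) / 3)"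
proof -
  interpret prob_space "GP n" by (rule prob_space_GP)
  define B where "B = (\<Sum>i<n. (b i)\<^sup>2)"
  have B0: "B \<ge> 0" unfolding B_def by (simp add: sum_nonneg)
  define S where "S = (\<lambda>x. \<Sum>i<n. b i * x i)"
  have Sm[measurable]: "S \<in> borel_measurable (GP n)" unfolding S_def by simp
  have h2: "has_bochner_integral (GP n) (\<lambda>x. (S x)\<^sup>2) B"
    by (rule has_bochner_integral_nn_integral) (auto simp: B0 S_def B_def GP_m2 sum_nonneg)
  have h4: "has_bochner_integral (GP n) (\<lambda>x. (S x) ^ 4) (3 * B\<^sup>2)"
    by (rule has_bochner_integral_nn_integral) (auto simp: B0 S_def B_def GP_m4 zero_le_even_power)
  have i2: "integrable (GP n) (\<lambda>x. (S x)\<^sup>2)" and e2: "integral\<^sup>L (GP n) (\<lambda>x. (S x)\<^sup>2) = B"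
    using h2 unfolding has_bochner_integral_iff by auto
  have i4: "integrable (GP n) (\<lambda>x. (S x) ^ 4)" and e4: "integral\<^sup>L (GP n) (\<lambda>x. (S x) ^ 4) = 3 * B\<^sup>2"
    using h4 unfolding has_bochner_integral_iff by auto
  have i1: "integrable (GP n) (\<lambda>x. \<bar>S x\<bar>)"
  proof (rule Bochner_Integration.integrable_bound)
    show "integrable (GP n) (\<lambda>x. 1 + (S x)\<^sup>2)" using i2 by simp
    show "(\<lambda>x. \<bar>S x\<bar>) \<in> borel_measurable (GP n)" by simp
    have "\<bar>s\<bar> \<le> 1 + s\<^sup>2" for s :: real
    proof -
      have a: "0 \<le> (\<bar>s\<bar> - 1)\<^sup>2" by simp
      have b: "(\<bar>s\<bar> - 1)\<^sup>2 = s\<^sup>2 - 2 * \<bar>s\<bar> + 1" by (simp add: power2_eq_square algebra_simps)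
      have c: "0 \<le> s\<^sup>2" by simp
      show ?thesis using a b c by linarith
    qed
    then show "AE x in GP n. norm \<bar>S x\<bar> \<le> norm (1 + (S x)\<^sup>2)" by (auto intro!: AE_I2)
  qed
  then show "integrable (GP n) (\<lambda>x. \<bar>\<Sum>i<n. b i * x i\<bar>)" by (simp add: S_def)
  have "integral\<^sup>L (GP n) (\<lambda>x. \<bar>S x\<bar>) \<ge> sqrt (B / 3)"
  proof (cases "B = 0")
    case True then show ?thesis by simp
  next
    case False
    then have Bp: "B > 0" using B0 by simp
    show ?thesis
    proof (rule khintchine_low_from_moments[OF Bp _ e2])
      show "integral\<^sup>L (GP n) (\<lambda>x. (S x) ^ 4) \<le> 3 * B\<^sup>2" by (simp add: e4)
      fix t :: real assume t: "t > 0"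
      have "integral\<^sup>L (GP n) (\<lambda>x. 3 / (2 * t) * (S x)\<^sup>2 - (S x) ^ 4 / (2 * t ^ 3)) \<le> integral\<^sup>L (GP n) (\<lambda>x. \<bar>S x\<bar>)"
        by (rule integral_mono) (use i1 i2 i4 abs_lower_poly[OF t] in auto)
      moreover have "integral\<^sup>L (GP n) (\<lambda>x. 3 / (2 * t) * (S x)\<^sup>2 - (S x) ^ 4 / (2 * t ^ 3))
          = 3 / (2 * t) * integral\<^sup>L (GP n) (\<lambda>x. (S x)\<^sup>2) - integral\<^sup>L (GP n) (\<lambda>x. (S x) ^ 4) / (2 * t ^ 3)"
        using i2 i4 by simp
      ultimately show "3 / (2 * t) * integral\<^sup>L (GP n) (\<lambda>x. (S x)\<^sup>2) - integral\<^sup>L (GP n) (\<lambda>x. (S x) ^ 4) / (2 * t ^ 3)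
          \<le> integral\<^sup>L (GP n) (\<lambda>x. \<bar>S x\<bar>)" by simp
    qed
  qed
  then show "integral\<^sup>L (GP n) (\<lambda>x. \<bar>\<Sum>i<n. b i * x i\<bar>) \<ge> sqrt ((\<Sum>i<n. (b i)\<^sup>2) / 3)"
    by (simp add: S_def B_def)
qed


definition diag :: "nat \<Rightarrow> (nat \<times> nat) list" where "diag m = map (\<lambda>k. (k, k)) [0..<m]"

lemma traversal_diag: "m \<ge> 1 \<Longrightarrow> traversal m m (diag m)"
  unfolding traversal_def diag_def
  by (auto simp: hd_map last_map hd_upt last_upt)

lemma trav_step:
  assumes "traversal m1 m2 T" "Suc k < length T"
  shows "fst (T ! Suc k) \<le> Suc (fst (T ! k)) \<and> fst (T ! k) \<le> fst (T ! Suc k) \<and> snd (T ! k) \<le> snd (T ! Suc k)"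
proof -
  obtain i j where ij: "T ! k = (i, j)" by fastforce
  have "T ! Suc k \<in> {(Suc i, j), (i, Suc j), (Suc i, Suc j)}"
    using assms ij unfolding traversal_def by (metis (no_types, lifting) case_prod_conv)
  then show ?thesis using ij by auto
qed

lemma trav_mono:
  assumes "traversal m1 m2 T" "k \<le> k'" "k' < length T"
  shows "fst (T ! k) \<le> fst (T ! k') \<and> snd (T ! k) \<le> snd (T ! k')"
  using assms(2,3)
proof (induction k')
  case 0 then show ?case by simp
next
  case (Suc k')
  show ?case
  proof (cases "k = Suc k'")
    case True then show ?thesis by simp
  next
    case False
    then have "k \<le> k'" using Suc by simp
    then show ?thesis using Suc trav_step[OF assms(1), of k'] by force
  qed
qed

lemma trav_bound:
  assumes "traversal m1 m2 T" "(i, j) \<in> set T"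
  shows "i \<le> m1 - 1 \<and> j \<le> m2 - 1"
proof -
  obtain k where k: "k < length T" "T ! k = (i, j)" using assms(2) by (metis in_set_conv_nth)
  have ne: "T \<noteq> []" and l: "last T = (m1 - 1, m2 - 1)" using assms(1) unfolding traversal_def by auto
  have "last T = T ! (length T - 1)" using ne by (simp add: last_conv_nth)
  then have "T ! (length T - 1) = (m1 - 1, m2 - 1)" using l by simp
  then have "fst (T ! (length T - 1)) = m1 - 1" "snd (T ! (length T - 1)) = m2 - 1" by auto
  moreover have "fst (T ! k) \<le> fst (T ! (length T - 1)) \<and> snd (T ! k) \<le> snd (T ! (length T - 1))"
    using trav_mono[OF assms(1), of k "length T - 1"] k ne by simp
  ultimately show ?thesis using k by simp
qed

lemma trav_cover:
  assumes "traversal m1 m2 T" "i < m1"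
  shows "\<exists>j. (i, j) \<in> set T"
proof -
  have ne: "T \<noteq> []" and h: "hd T = (0, 0)" and l: "last T = (m1 - 1, m2 - 1)"
    using assms(1) unfolding traversal_def by auto
  have h0: "fst (T ! 0) = 0" using ne h by (simp add: hd_conv_nth)
  have *: "\<forall>i \<le> fst (T ! k). \<exists>k' \<le> k. fst (T ! k') = i" if "k < length T" for k
    using that
  proof (induction k)
    case 0 then show ?case using h0 by auto
  next
    case (Suc k)
    show ?case
    proof (intro allI impI)
      fix i assume i: "i \<le> fst (T ! Suc k)"
      show "\<exists>k' \<le> Suc k. fst (T ! k') = i"
      proof (cases "i \<le> fst (T ! k)")
        case True then show ?thesis using Suc by (meson Suc_lessD le_SucI)
      next
        case False
        then have "i = fst (T ! Suc k)" using i trav_step[OF assms(1) Suc.prems] by auto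
        then show ?thesis by blast
      qed
    qed
  qed
  have lt: "length T - 1 < length T" using ne by simp
  have "fst (T ! (length T - 1)) = m1 - 1" using l ne by (simp add: last_conv_nth)
  then have "i \<le> fst (T ! (length T - 1))" using assms(2) by simp
  then obtain k' where "k' \<le> length T - 1" "fst (T ! k') = i" using *[OF lt] by blast
  then have "T ! k' \<in> set T" "fst (T ! k') = i" using lt by auto
  then show ?thesis by (metis prod.collapse)
qed

lemma sum_set_le_sum_list:
  fixes f :: "'a \<Rightarrow> real"
  assumes "\<And>x. 0 \<le> f x"
  shows "sum f (set xs) \<le> sum_list (map f xs)"
proof (induction xs)
  case Nil then show ?case by simp
next
  case (Cons x xs)
  have "sum f (set (x # xs)) \<le> f x + sum f (set xs)"
    by (cases "x \<in> set xs") (auto simp: insert_absorb assms sum.insert)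
  then show ?case using Cons by simp
qed

lemma edist_nonneg: "0 \<le> edist d x y" by (simp add: edist_def sum_nonneg)

lemma edist_le2:
  assumes "x \<in> unit_ball d" "y \<in> unit_ball d"
  shows "edist d x y \<le> 2"
proof -
  have "(\<Sum>k<d. (x k - y k)\<^sup>2) \<le> (\<Sum>k<d. 2 * (x k)\<^sup>2 + 2 * (y k)\<^sup>2)"
  proof (rule sum_mono)
    fix k
    have "0 \<le> (x k + y k)\<^sup>2" by simp
    then show "(x k - y k)\<^sup>2 \<le> 2 * (x k)\<^sup>2 + 2 * (y k)\<^sup>2" by (simp add: power2_eq_square algebra_simps)
  qed
  also have "\<dots> = 2 * (\<Sum>k<d. (x k)\<^sup>2) + 2 * (\<Sum>k<d. (y k)\<^sup>2)"
    by (simp add: sum.distrib sum_distrib_left)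
  also have "\<dots> \<le> 4" using assms unfolding unit_ball_def by auto
  finally have "(\<Sum>k<d. (x k - y k)\<^sup>2) \<le> 2\<^sup>2" by simp
  then show ?thesis unfolding edist_def by (metis real_sqrt_le_iff real_sqrt_abs abs_numeral)
qed

lemma edist_ge_coord:
  assumes "d \<ge> 1"
  shows "\<bar>x 0 - y 0\<bar> \<le> edist d x y"
proof -
  have "(x 0 - y 0)\<^sup>2 \<le> (\<Sum>k<d. (x k - y k)\<^sup>2)"
    using assms by (intro member_le_sum) auto
  then have "sqrt ((x 0 - y 0)\<^sup>2) \<le> sqrt (\<Sum>k<d. (x k - y k)\<^sup>2)" by (rule real_sqrt_le_mono)
  then show ?thesis unfolding edist_def by (simp add: sum_nonneg)
qed

lemma dtw_sum_diag:
  "sum_list (map (\<lambda>(i, j). edist d (\<sigma> ! i) (\<psi> ! j)) (diag m)) = (\<Sum>k<m. edist d (\<sigma> ! k) (\<psi> ! k))"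
  unfolding diag_def by (simp add: interv_sum_list_conv_sum_set_nat atLeast0LessThan comp_def)

lemma dtw_bdd_below:
  "bdd_below {(\<Sum>(i, j)\<leftarrow>T. edist d (\<sigma> ! i) (\<tau> ! j)) | T. traversal (length \<sigma>) (length \<tau>) T}"
  by (rule bdd_belowI[of _ 0]) (auto intro!: sum_list_nonneg simp: edist_nonneg split: prod.splits)

lemma dtw_upper:
  assumes "length \<sigma> = m" "length \<psi> = m" "m \<ge> 1" "set \<sigma> \<subseteq> unit_ball d" "set \<psi> \<subseteq> unit_ball d"
  shows "dtw d \<sigma> \<psi> \<le> 2 * m"
proof -
  have "dtw d \<sigma> \<psi> \<le> sum_list (map (\<lambda>(i, j). edist d (\<sigma> ! i) (\<psi> ! j)) (diag m))"
    unfolding dtw_def using traversal_diag[OF assms(3)] assms(1,2)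
    by (intro cInf_lower[OF _ dtw_bdd_below]) auto
  also have "\<dots> = (\<Sum>k<m. edist d (\<sigma> ! k) (\<psi> ! k))" by (rule dtw_sum_diag)
  also have "\<dots> \<le> (\<Sum>k<m. 2)"
    using assms by (intro sum_mono edist_le2) (auto simp: subset_iff)
  finally show ?thesis by simp
qed

lemma dtw_nonneg:
  assumes "length \<sigma> = m" "length \<psi> = m" "m \<ge> 1"
  shows "0 \<le> dtw d \<sigma> \<psi>"
  unfolding dtw_def using traversal_diag[OF assms(3)] assms(1,2)
  by (intro cInf_greatest) (auto intro!: sum_list_nonneg simp: edist_nonneg split: prod.splits)

lemma dtw_const_lower:
  assumes "length \<sigma> = m" "m \<ge> 1"
  shows "(\<Sum>k<m. edist d (\<sigma> ! k) p) \<le> dtw d \<sigma> (replicate m p)"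
  unfolding dtw_def
proof (intro cInf_greatest)
  show "{(\<Sum>(i, j)\<leftarrow>T. edist d (\<sigma> ! i) (replicate m p ! j)) | T. traversal (length \<sigma>) (length (replicate m p)) T} \<noteq> {}"
    using traversal_diag[OF assms(2)] assms(1) by auto
  fix x assume "x \<in> {(\<Sum>(i, j)\<leftarrow>T. edist d (\<sigma> ! i) (replicate m p ! j)) | T. traversal (length \<sigma>) (length (replicate m p)) T}"
  then obtain T where T: "traversal m m T" and x: "x = (\<Sum>(i, j)\<leftarrow>T. edist d (\<sigma> ! i) (replicate m p ! j))"
    using assms(1) by auto
  define g where "g i = edist d (\<sigma> ! i) p" for i
  have "(\<Sum>k<m. g k) \<le> sum g (fst ` set T)"
  proof (rule sum_mono2)
    show "{..<m} \<subseteq> fst ` set T" using trav_cover[OF T] by (force simp: image_iff)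
  qed (auto simp: g_def edist_nonneg)
  also have "\<dots> \<le> sum (g \<circ> fst) (set T)"
    by (rule sum_image_le) (auto simp: g_def edist_nonneg)
  also have "\<dots> = sum (\<lambda>(i, j). edist d (\<sigma> ! i) (replicate m p ! j)) (set T)"
  proof (rule sum.cong[OF refl])
    fix x assume "x \<in> set T"
    moreover obtain i j where "x = (i, j)" by fastforce
    ultimately have "j < m" using trav_bound[OF T] assms(2) by fastforce
    then show "(g \<circ> fst) x = (\<lambda>(i, j). edist d (\<sigma> ! i) (replicate m p ! j)) x"
      using \<open>x = (i, j)\<close> by (simp add: g_def)
  qed
  also have "\<dots> \<le> x" unfolding x
    by (rule sum_set_le_sum_list) (auto simp: edist_nonneg)
  finally show "(\<Sum>k<m. edist d (\<sigma> ! k) p) \<le> x" by (simp add: g_def)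
qed

definition ep :: point where "ep = (\<lambda>k. if k = 0 then 1 else 0)"
definition em :: point where "em = (\<lambda>k. if k = 0 then -1 else 0)"

lemma ep_ball: "d \<ge> 1 \<Longrightarrow> ep \<in> unit_ball d"
proof -
  assume d: "d \<ge> 1"
  have "(\<Sum>k<d. (ep k)\<^sup>2) = (\<Sum>k<d. if k = 0 then 1 else 0)" by (intro sum.cong) (auto simp: ep_def)
  also have "\<dots> = 1" using d by simp
  finally have "(\<Sum>k<d. (ep k)\<^sup>2) = 1" .
  then show ?thesis using d unfolding unit_ball_def by (auto simp: ep_def)
qed

lemma em_ball: "d \<ge> 1 \<Longrightarrow> em \<in> unit_ball d"
proof -
  assume d: "d \<ge> 1"
  have "(\<Sum>k<d. (em k)\<^sup>2) = (\<Sum>k<d. if k = 0 then 1 else 0)" by (intro sum.cong) (auto simp: em_def)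
  also have "\<dots> = 1" using d by simp
  finally have "(\<Sum>k<d. (em k)\<^sup>2) = 1" .
  then show ?thesis using d unfolding unit_ball_def by (auto simp: em_def)
qed

lemma curves_ep: "d \<ge> 1 \<Longrightarrow> replicate m ep \<in> curves d m"
  using ep_ball by (auto simp: curves_def)

lemma curves_em: "d \<ge> 1 \<Longrightarrow> replicate m em \<in> curves d m"
  using em_ball by (auto simp: curves_def)

lemma dtw_pair_lower:
  assumes "d \<ge> 1" "m \<ge> 1" "\<sigma> \<in> curves d m"
  shows "2 * real m \<le> dtw d \<sigma> (replicate m ep) + dtw d \<sigma> (replicate m em)"
proof -
  have l: "length \<sigma> = m" using assms(3) by (simp add: curves_def)
  have "(\<Sum>k<m. (2::real)) \<le> (\<Sum>k<m. edist d (\<sigma> ! k) ep + edist d (\<sigma> ! k) em)"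
  proof (rule sum_mono)
    fix k
    have "\<bar>(\<sigma> ! k) 0 - ep 0\<bar> + \<bar>(\<sigma> ! k) 0 - em 0\<bar> \<ge> 2" by (simp add: ep_def em_def)
    then show "2 \<le> edist d (\<sigma> ! k) ep + edist d (\<sigma> ! k) em"
      using edist_ge_coord[OF assms(1), of "\<sigma> ! k" ep] edist_ge_coord[OF assms(1), of "\<sigma> ! k" em] by linarith
  qed
  also have "\<dots> = (\<Sum>k<m. edist d (\<sigma> ! k) ep) + (\<Sum>k<m. edist d (\<sigma> ! k) em)" by (simp add: sum.distrib)
  also have "\<dots> \<le> dtw d \<sigma> (replicate m ep) + dtw d \<sigma> (replicate m em)"
    using dtw_const_lower[OF l assms(2)] by (intro add_mono)
  finally show ?thesis by simp
qed

lemma dtw_curves_bounds: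
  assumes "m \<ge> 1" "\<sigma> \<in> curves d m" "\<psi> \<in> curves d m"
  shows "0 \<le> dtw d \<sigma> \<psi> \<and> dtw d \<sigma> \<psi> \<le> 2 * m"
  using assms dtw_nonneg[of \<sigma> m \<psi>] dtw_upper[of \<sigma> m \<psi>] by (auto simp: curves_def)


lemma sum_abs_bound:
  fixes a g :: "nat \<Rightarrow> real"
  assumes ab: "\<And>i. i < n \<Longrightarrow> 0 \<le> a i \<and> a i \<le> C"
  shows "\<bar>(1 / real n) * (\<Sum>i<n. a i * g i)\<bar> \<le> C / real n * (\<Sum>i<n. \<bar>g i\<bar>)"
proof -
  have "\<bar>\<Sum>i<n. a i * g i\<bar> \<le> (\<Sum>i<n. \<bar>a i * g i\<bar>)" by (rule sum_abs)
  also have "\<dots> \<le> (\<Sum>i<n. C * \<bar>g i\<bar>)"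
  proof (rule sum_mono)
    fix i assume "i \<in> {..<n}"
    then have "0 \<le> a i" "a i \<le> C" using ab by auto
    then show "\<bar>a i * g i\<bar> \<le> C * \<bar>g i\<bar>" by (simp add: abs_mult mult_right_mono)
  qed
  also have "\<dots> = C * (\<Sum>i<n. \<bar>g i\<bar>)" by (simp add: sum_distrib_left)
  finally have "\<bar>\<Sum>i<n. a i * g i\<bar> \<le> C * (\<Sum>i<n. \<bar>g i\<bar>)" .
  then have "(1 / real n) * \<bar>\<Sum>i<n. a i * g i\<bar> \<le> (1 / real n) * (C * (\<Sum>i<n. \<bar>g i\<bar>))"
    by (intro mult_left_mono) auto
  then show ?thesis by (simp add: abs_mult)
qed

locale supsetup =
  fixes A :: "curve set" and a :: "nat \<Rightarrow> curve \<Rightarrow> real" and n :: nat and C :: real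
  assumes A: "A \<noteq> {}"
    and ab: "\<And>i \<psi>. i < n \<Longrightarrow> \<psi> \<in> A \<Longrightarrow> 0 \<le> a i \<psi> \<and> a i \<psi> \<le> C"
begin

definition F :: "curve \<Rightarrow> (nat \<Rightarrow> real) \<Rightarrow> real" where
  "F \<psi> g = \<bar>(1 / real n) * (\<Sum>i<n. a i \<psi> * g i)\<bar>"

definition H :: "(nat \<Rightarrow> real) \<Rightarrow> real" where
  "H g = (SUP \<psi>\<in>A. F \<psi> g)"

lemma F_bound: "\<psi> \<in> A \<Longrightarrow> F \<psi> g \<le> C / real n * (\<Sum>i<n. \<bar>g i\<bar>)"
  unfolding F_def by (rule sum_abs_bound) (use ab in auto)

lemma bdd: "bdd_above ((\<lambda>\<psi>. F \<psi> g) ` A)"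
  using F_bound by (intro bdd_aboveI2) auto

lemma F_le_H: "\<psi> \<in> A \<Longrightarrow> F \<psi> g \<le> H g"
  unfolding H_def by (rule cSUP_upper[OF _ bdd])

lemma H_nonneg: "0 \<le> H g"
proof -
  obtain \<psi> where "\<psi> \<in> A" using A by auto
  then show ?thesis using F_le_H[of \<psi> g] by (smt (verit) F_def abs_ge_zero)
qed

lemma H_bound: "H g \<le> C / real n * (\<Sum>i<n. \<bar>g i\<bar>)"
  unfolding H_def using A F_bound by (intro cSUP_least) auto

lemma H_lip: "H g \<le> H g' + C / real n * (\<Sum>i<n. \<bar>g i - g' i\<bar>)"
  unfolding H_def
proof (intro cSUP_least A)
  fix \<psi> assume p: "\<psi> \<in> A"
  have "F \<psi> g \<le> F \<psi> g' + \<bar>(1 / real n) * (\<Sum>i<n. a i \<psi> * (g i - g' i))\<bar>"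
  proof -
    have e: "(\<Sum>i<n. a i \<psi> * g i) = (\<Sum>i<n. a i \<psi> * g' i) + (\<Sum>i<n. a i \<psi> * (g i - g' i))"
      by (simp add: right_diff_distrib sum_subtractf)
    have "(1 / real n) * (\<Sum>i<n. a i \<psi> * g i) = (1 / real n) * (\<Sum>i<n. a i \<psi> * g' i) + (1 / real n) * (\<Sum>i<n. a i \<psi> * (g i - g' i))"
      unfolding e by (rule distrib_left)
    then show ?thesis unfolding F_def by linarith
  qed
  also have "\<dots> \<le> F \<psi> g' + C / real n * (\<Sum>i<n. \<bar>g i - g' i\<bar>)"
    using sum_abs_bound[of n "\<lambda>i. a i \<psi>" C "\<lambda>i. g i - g' i"] ab p by auto
  also have "\<dots> \<le> (SUP \<psi>\<in>A. F \<psi> g') + C / real n * (\<Sum>i<n. \<bar>g i - g' i\<bar>)"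
    using F_le_H[OF p, of g'] unfolding H_def by simp
  finally show "F \<psi> g \<le> (SUP \<psi>\<in>A. F \<psi> g') + C / real n * (\<Sum>i<n. \<bar>g i - g' i\<bar>)" .
qed

lemma H_lip_abs: "\<bar>H g - H g'\<bar> \<le> C / real n * (\<Sum>i<n. \<bar>g i - g' i\<bar>)"
proof -
  have "(\<Sum>i<n. \<bar>g' i - g i\<bar>) = (\<Sum>i<n. \<bar>g i - g' i\<bar>)" by (simp add: abs_minus_commute)
  then show ?thesis using H_lip[of g g'] H_lip[of g' g] by auto
qed

lemma H_cont: "continuous_on UNIV H"
proof (rule continuous_at_imp_continuous_on, intro ballI)
  fix x :: "nat \<Rightarrow> real"
  have coord: "((\<lambda>y. y i) \<longlongrightarrow> x i) (at x)" for i
  proof -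
    have "isCont (\<lambda>y::nat \<Rightarrow> real. y i) x"
      using continuous_on_eq_continuous_at[OF open_UNIV, of "\<lambda>y::nat \<Rightarrow> real. y i"] by simp
    then show ?thesis by (simp add: continuous_at)
  qed
  have "((\<lambda>y. C / real n * (\<Sum>i<n. \<bar>y i - x i\<bar>)) \<longlongrightarrow> C / real n * (\<Sum>i<n. \<bar>x i - x i\<bar>)) (at x)"
    by (intro tendsto_mult tendsto_const tendsto_sum tendsto_rabs tendsto_diff coord)
  then have lim: "((\<lambda>y. C / real n * (\<Sum>i<n. \<bar>y i - x i\<bar>)) \<longlongrightarrow> 0) (at x)" by simp
  have "((\<lambda>y. H y - H x) \<longlongrightarrow> 0) (at x)"
  proof (rule Lim_null_comparison[OF _ lim], rule always_eventually, intro allI)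
    fix y show "norm (H y - H x) \<le> C / real n * (\<Sum>i<n. \<bar>y i - x i\<bar>)" using H_lip_abs[of y x] by simp
  qed
  then show "isCont H x" by (simp add: continuous_at LIM_zero_iff)
qed

lemma H_restrict: "H (\<lambda>i. if i < n then g i else 0) = H g"
proof -
  have "F \<psi> (\<lambda>i. if i < n then g i else 0) = F \<psi> g" for \<psi>
  proof -
    have "(\<Sum>i<n. a i \<psi> * (if i < n then g i else 0)) = (\<Sum>i<n. a i \<psi> * g i)" by (rule sum.cong) auto
    then show ?thesis unfolding F_def by simp
  qed
  then show ?thesis unfolding H_def by simp
qed

lemma H_meas: "H \<in> borel_measurable (GP n)"
proof -
  have "H \<in> borel_measurable borel" by (rule borel_measurable_continuous_onI[OF H_cont])
  then have H1: "H \<in> borel_measurable (PiM UNIV (\<lambda>_::nat. borel :: real measure))"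
    using measurable_cong_sets[OF sets_PiM_equal_borel refl] by blast
  have r: "(\<lambda>g i. if i < n then g i else (0::real)) \<in> measurable (GP n) (PiM UNIV (\<lambda>_::nat. borel :: real measure))"
  proof (rule measurable_PiM_single')
    fix i :: nat
    show "(\<lambda>g. if i < n then g i else (0::real)) \<in> borel_measurable (GP n)"
    proof (cases "i < n")
      case True
      have "(\<lambda>g. g i) \<in> measurable (GP n) std_gaussian"
        using True by (intro measurable_component_singleton) auto
      then have "(\<lambda>g. g i) \<in> borel_measurable (GP n)"
        using measurable_cong_sets[OF refl sets_std_gaussian] by blast
      then show ?thesis using True by simp
    qed simp
  qed (auto simp: space_PiM)
  have "(\<lambda>g. H (\<lambda>i. if i < n then g i else 0)) \<in> borel_measurable (GP n)"
    using measurable_comp[OF r H1] by (simp add: comp_def)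
  then show ?thesis by (simp add: H_restrict)
qed

lemma H_pair_lower:
  assumes "\<psi>1 \<in> A" "\<psi>2 \<in> A"
  shows "(1 / (2 * real n)) * \<bar>\<Sum>i<n. (a i \<psi>1 + a i \<psi>2) * g i\<bar> \<le> H g"
proof -
  have eq: "(1 / real n) * (\<Sum>i<n. (a i \<psi>1 + a i \<psi>2) * g i) =
      (1 / real n) * (\<Sum>i<n. a i \<psi>1 * g i) + (1 / real n) * (\<Sum>i<n. a i \<psi>2 * g i)"
    by (simp add: distrib_right sum.distrib distrib_left)
  have "\<bar>(1 / real n) * (\<Sum>i<n. (a i \<psi>1 + a i \<psi>2) * g i)\<bar> \<le> F \<psi>1 g + F \<psi>2 g"
    unfolding eq F_def by (rule abs_triangle_ineq)
  also have "\<dots> \<le> 2 * H g" using F_le_H[OF assms(1), of g] F_le_H[OF assms(2), of g] by simp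
  finally show ?thesis by (simp add: abs_mult)
qed

end


lemma final_arith:
  fixes M N B :: real
  assumes M: "M \<ge> 0" and N: "N > 0" and B: "4 * M\<^sup>2 * N \<le> B"
  shows "1 / 2 * sqrt (M\<^sup>2 / N) \<le> 1 / (2 * N) * sqrt (B / 3)"
proof -
  have s1: "sqrt (M\<^sup>2 / N) = M / sqrt N" using M by (simp add: real_sqrt_divide)
  have p: "0 \<le> M\<^sup>2 * N" using N by simp
  have q: "4 * M\<^sup>2 * N = 4 * (M\<^sup>2 * N)" by simp
  have "M\<^sup>2 * N \<le> B / 3" using B p unfolding q by linarith
  then have "sqrt (M\<^sup>2 * N) \<le> sqrt (B / 3)" by (rule real_sqrt_le_mono)
  then have s2: "M * sqrt N \<le> sqrt (B / 3)" using M by (simp add: real_sqrt_mult)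
  have sN: "sqrt N * sqrt N = N" using N by simp
  have sp: "sqrt N > 0" using N by simp
  have "(M * sqrt N) / N = (M * sqrt N) / (sqrt N * sqrt N)" by (simp only: sN)
  also have "\<dots> = M / sqrt N" by (rule nonzero_mult_divide_mult_cancel_right) (use sp in simp)
  finally have s3: "M / sqrt N = (M * sqrt N) / N" by simp
  have "1 / 2 * sqrt (M\<^sup>2 / N) = 1 / (2 * N) * (M * sqrt N)" unfolding s1 s3 by simp
  also have "\<dots> \<le> 1 / (2 * N) * sqrt (B / 3)" using s2 N by (intro mult_left_mono) auto
  finally show ?thesis .
qed

theorem proposition4p2:
  shows "\<exists>c>0. \<forall>d m n (\<sigma> :: nat \<Rightarrow> curve).
           d \<ge> 1 \<longrightarrow> m \<ge> 1 \<longrightarrow> n \<ge> 1 \<longrightarrow> (\<forall>i<n. \<sigma> i \<in> curves d m) \<longrightarrow>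
             rademacher_complexity d m n \<sigma> \<ge> c * sqrt (real m ^ 2 / real n) \<and>
             gaussian_complexity d m n \<sigma> \<ge> c * sqrt (real m ^ 2 / real n)"
proof (intro exI[of _ "1/2"] conjI allI impI)
  show "(0::real) < 1 / 2" by simp
  fix d m n and \<sigma> :: "nat \<Rightarrow> curve"
  assume d: "d \<ge> 1" and m: "m \<ge> 1" and n: "n \<ge> 1" and \<sigma>: "\<forall>i<n. \<sigma> i \<in> curves d m"
  interpret S: supsetup "curves d m" "\<lambda>i \<psi>. dtw d (\<sigma> i) \<psi>" n "2 * real m"
  proof
    show "curves d m \<noteq> {}" using curves_ep[OF d] by auto
    fix i \<psi> assume "i < n" "\<psi> \<in> curves d m"
    then show "0 \<le> dtw d (\<sigma> i) \<psi> \<and> dtw d (\<sigma> i) \<psi> \<le> 2 * real m"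
      using dtw_curves_bounds[OF m, of "\<sigma> i" d \<psi>] \<sigma> by auto
  qed
  have Heq: "S.H g = (SUP \<psi>\<in>curves d m. \<bar>(1 / real n) * (\<Sum>i<n. dtw d (\<sigma> i) \<psi> * g i)\<bar>)" for g
    by (simp add: S.H_def S.F_def)
  define b where "b i = dtw d (\<sigma> i) (replicate m ep) + dtw d (\<sigma> i) (replicate m em)" for i
  have bge: "2 * real m \<le> b i" if "i < n" for i
    unfolding b_def using dtw_pair_lower[OF d m] \<sigma> that by auto
  define B where "B = (\<Sum>i<n. (b i)\<^sup>2)"
  have Bge: "4 * (real m)\<^sup>2 * real n \<le> B"
  proof -
    have "(\<Sum>i<n. (2 * real m)\<^sup>2) \<le> B" unfolding B_def
    proof (rule sum_mono)
      fix i assume "i \<in> {..<n}"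
      then show "(2 * real m)\<^sup>2 \<le> (b i)\<^sup>2" using bge[of i] by (intro power_mono) auto
    qed
    then show ?thesis by (simp add: power2_eq_square algebra_simps)
  qed
  have low: "1 / (2 * real n) * \<bar>\<Sum>i<n. b i * g i\<bar> \<le> S.H g" for g
    using S.H_pair_lower[OF curves_ep[OF d] curves_em[OF d], of g] unfolding b_def by simp
  have fin: "1 / 2 * sqrt (real m ^ 2 / real n) \<le> 1 / (2 * real n) * sqrt (B / 3)"
    using final_arith[of "real m" "real n" B] Bge n by simp
  have "1 / (2 * real n) * sqrt (B / 3) \<le> 1 / (2 * real n) * (radsum n b abs / 2 ^ n)"
    using radsum_abs[of n b] unfolding B_def by (intro mult_left_mono) (auto simp: field_simps)
  also have "\<dots> = (\<Sum>r\<in>PiE {..<n} (\<lambda>_. {-1, 1::real}). 1 / (2 * real n) * \<bar>\<Sum>i<n. b i * r i\<bar>) / 2 ^ n"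
    unfolding radsum_def by (simp add: sum_distrib_left)
  also have "\<dots> \<le> (\<Sum>r\<in>PiE {..<n} (\<lambda>_. {-1, 1::real}). S.H r) / 2 ^ n"
    by (intro divide_right_mono sum_mono low) auto
  also have "\<dots> = rademacher_complexity d m n \<sigma>"
    unfolding rademacher_complexity_def Heq ..
  finally show "1 / 2 * sqrt (real m ^ 2 / real n) \<le> rademacher_complexity d m n \<sigma>"
    using fin by linarith
  interpret G: prob_space "GP n" by (rule prob_space_GP)
  have int_coord: "integrable (GP n) (\<lambda>x. \<bar>x i\<bar>)" if "i < n" for i
  proof -
    have "(\<Sum>j<n. (if j = i then 1 else 0) * x j) = x i" for x :: "nat \<Rightarrow> real"
    proof -
      have "(\<Sum>j<n. (if j = i then 1 else 0) * x j) = (\<Sum>j<n. if j = i then x j else 0)"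
        by (rule sum.cong) auto
      then show ?thesis using that by simp
    qed
    then show ?thesis using gauss_khintchine(1)[where n=n and b="\<lambda>j. if j = i then 1 else 0"] by simp
  qed
  have intH: "integrable (GP n) S.H"
  proof (rule Bochner_Integration.integrable_bound)
    show "integrable (GP n) (\<lambda>x. 2 * real m / real n * (\<Sum>i<n. \<bar>x i\<bar>))"
      using int_coord by (intro Bochner_Integration.integrable_mult_right Bochner_Integration.integrable_sum) auto
    show "S.H \<in> borel_measurable (GP n)" by (rule S.H_meas)
    show "AE x in GP n. norm (S.H x) \<le> norm (2 * real m / real n * (\<Sum>i<n. \<bar>x i\<bar>))"
    proof (rule AE_I2)
      fix x
      have "0 \<le> S.H x" by (rule S.H_nonneg)
      moreover have "S.H x \<le> 2 * real m / real n * (\<Sum>i<n. \<bar>x i\<bar>)" by (rule S.H_bound)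
      ultimately show "norm (S.H x) \<le> norm (2 * real m / real n * (\<Sum>i<n. \<bar>x i\<bar>))" by simp
    qed
  qed
  have "1 / (2 * real n) * sqrt (B / 3) \<le> 1 / (2 * real n) * integral\<^sup>L (GP n) (\<lambda>x. \<bar>\<Sum>i<n. b i * x i\<bar>)"
    using gauss_khintchine(2)[where n=n and b=b] unfolding B_def by (intro mult_left_mono) auto
  also have "\<dots> = integral\<^sup>L (GP n) (\<lambda>x. 1 / (2 * real n) * \<bar>\<Sum>i<n. b i * x i\<bar>)"
    by simp
  also have "\<dots> \<le> integral\<^sup>L (GP n) S.H"
    by (rule integral_mono) (use intH gauss_khintchine(1)[where n=n and b=b] low in auto)
  also have "\<dots> = gaussian_complexity d m n \<sigma>"
    unfolding gaussian_complexity_def Heq ..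
  finally show "1 / 2 * sqrt (real m ^ 2 / real n) \<le> gaussian_complexity d m n \<sigma>"
    using fin by linarith
qed


end
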